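(* Let $\mathcal{P}$ be a locally finite poset. Then $J\triangleright\zeta_3=\delta_3$; equivalently, for all $(x,y,z)\in\mathcal{F}l^3(\mathcal{P})$, $$\sum_{x\le a\le y\le b\le z}J(x,a,a)\,J(b,b,z)=\delta_3(x,y,z).$$
   Context: $\mathcal{F}l^3(\mathcal{P})=\{(x,y,z)\in\mathcal{P}^3:x\le y\le z\}$. For functions $f,g:\mathcal{F}l^3(\mathcal{P})\to\mathbb{Z}$, define $(f\triangleright g)(x,y,z)=\sum_{x\le a\le y\le b\le z}f(x,a,a)\,g(a,y,b)\,f(b,b,z)$ (sum over $a,b\in\mathcal{P}$). $\zeta_3$ is the constant function $1$ on $\mathcal{F}l^3(\mathcal{P})$, $\delta_3(x,y,z)=1$ if $x=y=z$ and $0$ otherwise, and $J:\mathcal{F}l^3(\mathcal{P})\to\mathbb{Z}$ is the unique function with $\zeta_3\triangleright J=\delta_3$, i.e. $\sum_{x\le a\le y\le b\le z}J(a,y,b)=\delta_3(x,y,z)$ for all $(x,y,z)$. *)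

theory Defs
  imports Main
begin

text \<open>Posets are modelled by a type of class order. Functions on Fl^3(P) are
curried functions of three arguments; only their values on triples x \<le> y \<le> z matter.\<close>

definition locally_finite_poset :: "'a::order itself \<Rightarrow> bool" where
  "locally_finite_poset _ \<longleftrightarrow> (\<forall>x y :: 'a. finite {x..y})"

definition Fl3 :: "('a::order \<times> 'a \<times> 'a) set" where
  "Fl3 = {(x, y, z). x \<le> y \<and> y \<le> z}"

definition tri :: "('a::order \<Rightarrow> 'a \<Rightarrow> 'a \<Rightarrow> int) \<Rightarrow> ('a \<Rightarrow> 'a \<Rightarrow> 'a \<Rightarrow> int)
    \<Rightarrow> 'a \<Rightarrow> 'a \<Rightarrow> 'a \<Rightarrow> int" (infixl "\<triangleright>" 70) where
  "(f \<triangleright> g) x y z = (\<Sum>(a, b) \<in> {x..y} \<times> {y..z}. f x a a * g a y b * f b b z)"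

definition zeta3 :: "'a::order \<Rightarrow> 'a \<Rightarrow> 'a \<Rightarrow> int" where
  "zeta3 x y z = 1"

definition delta3 :: "'a::order \<Rightarrow> 'a \<Rightarrow> 'a \<Rightarrow> int" where
  "delta3 x y z = (if x = y \<and> y = z then 1 else 0)"

definition J :: "'a::order \<Rightarrow> 'a \<Rightarrow> 'a \<Rightarrow> int" where
  "J = (THE j. (\<forall>x y z. (x, y, z) \<notin> Fl3 \<longrightarrow> j x y z = 0) \<and>
               (\<forall>x y z. (x, y, z) \<in> Fl3 \<longrightarrow> (zeta3 \<triangleright> j) x y z = delta3 x y z))"

end

theory Submission
  imports Defs
begin

lemma inv_left:
  fixes f :: "'a::order \<Rightarrow> 'a \<Rightarrow> int"
  assumes fin: "\<And>x y::'a. finite {x..y}"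
  and h: "\<And>x y. x \<le> y \<Longrightarrow> (\<Sum>a\<in>{x..y}. f a y) = (if x = y then 1 else 0)"
  shows "x \<le> y \<Longrightarrow> (\<Sum>a\<in>{x..y}. f x a) = (if x = y then 1 else 0)"
proof (induction "card {x..y}" arbitrary: x rule: less_induct)
  case less
  show ?case
  proof (cases "x = y")
    case True then show ?thesis using h[of y y] by simp
  next
    case False
    have IH: "(\<Sum>c\<in>{a..y}. f a c) = (if a = y then 1 else 0)" if a: "a \<in> {x..y} - {x}" for a
    proof -
      have "{a..y} \<subset> {x..y}" using a by (auto intro: order_trans)
      hence "card {a..y} < card {x..y}" by (rule psubset_card_mono[OF fin])
      thus ?thesis using less.hyps a by auto
    qed
    have sw: "(\<Sum>b\<in>{x..y}. \<Sum>a\<in>{a. a\<in>{x..y} \<and> a \<le> b}. f a b)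
        = (\<Sum>a\<in>{x..y}. \<Sum>b\<in>{b. b\<in>{x..y} \<and> a \<le> b}. f a b)"
      using sum.swap_restrict[OF fin fin, where g="\<lambda>a b. f a b" and R="\<lambda>a b. a \<le> b"] by simp
    have e1: "b\<in>{x..y} \<Longrightarrow> {a. a\<in>{x..y} \<and> a \<le> b} = {x..b}" for b by auto
    have e2: "a\<in>{x..y} \<Longrightarrow> {b. b\<in>{x..y} \<and> a \<le> b} = {a..y}" for a by (auto intro: order_trans)
    have "(\<Sum>b\<in>{x..y}. \<Sum>a\<in>{a. a\<in>{x..y} \<and> a \<le> b}. f a b) = (\<Sum>b\<in>{x..y}. (if x = b then 1 else 0))"
    proof (rule sum.cong)
      fix b assume b: "b \<in> {x..y}"
      show "(\<Sum>a\<in>{a. a\<in>{x..y} \<and> a \<le> b}. f a b) = (if x = b then 1 else 0)"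
        unfolding e1[OF b] using b by (intro h) auto
    qed simp
    also have "\<dots> = 1" using less.prems fin by (simp add: sum.delta)
    finally have L0: "(\<Sum>b\<in>{x..y}. \<Sum>a\<in>{a. a\<in>{x..y} \<and> a \<le> b}. f a b) = 1" .
    have "(\<Sum>a\<in>{x..y}. \<Sum>b\<in>{b. b\<in>{x..y} \<and> a \<le> b}. f a b) = (\<Sum>a\<in>{x..y}. \<Sum>b\<in>{a..y}. f a b)"
      by (rule sum.cong[OF refl]) (simp only: e2)
    with L0 sw have L: "(\<Sum>a\<in>{x..y}. \<Sum>b\<in>{a..y}. f a b) = 1" by simp
    have "(\<Sum>a\<in>{x..y}. \<Sum>b\<in>{a..y}. f a b) = (\<Sum>b\<in>{x..y}. f x b) + (\<Sum>a\<in>{x..y}-{x}. \<Sum>b\<in>{a..y}. f a b)"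
      using less.prems by (intro sum.remove[OF fin]) auto
    also have "(\<Sum>a\<in>{x..y}-{x}. \<Sum>b\<in>{a..y}. f a b) = (\<Sum>a\<in>{x..y}-{x}. (if a = y then 1 else 0))"
      by (rule sum.cong, simp, rule IH)
    also have "\<dots> = 1" using less.prems False fin by (simp add: sum.delta')
    finally show ?thesis using L False by simp
  qed
qed

lemma inv_right:
  fixes f :: "'a::order \<Rightarrow> 'a \<Rightarrow> int"
  assumes fin: "\<And>x y::'a. finite {x..y}"
  and h: "\<And>x y. x \<le> y \<Longrightarrow> (\<Sum>a\<in>{x..y}. f x a) = (if x = y then 1 else 0)"
  shows "x \<le> y \<Longrightarrow> (\<Sum>a\<in>{x..y}. f a y) = (if x = y then 1 else 0)"
proof (induction "card {x..y}" arbitrary: y rule: less_induct)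
  case less
  show ?case
  proof (cases "x = y")
    case True then show ?thesis using h[of y y] by simp
  next
    case False
    have IH: "(\<Sum>c\<in>{x..b}. f c b) = (if x = b then 1 else 0)" if b: "b \<in> {x..y} - {y}" for b
    proof -
      have "{x..b} \<subset> {x..y}" using b by (auto intro: order_trans)
      hence "card {x..b} < card {x..y}" by (rule psubset_card_mono[OF fin])
      thus ?thesis using less.hyps b by auto
    qed
    have sw: "(\<Sum>a\<in>{x..y}. \<Sum>b\<in>{b. b\<in>{x..y} \<and> a \<le> b}. f a b)
        = (\<Sum>b\<in>{x..y}. \<Sum>a\<in>{a. a\<in>{x..y} \<and> a \<le> b}. f a b)"
      using sum.swap_restrict[OF fin fin, where g="\<lambda>a b. f a b" and R="\<lambda>a b. a \<le> b"] by simp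
    have e1: "b\<in>{x..y} \<Longrightarrow> {a. a\<in>{x..y} \<and> a \<le> b} = {x..b}" for b by auto
    have e2: "a\<in>{x..y} \<Longrightarrow> {b. b\<in>{x..y} \<and> a \<le> b} = {a..y}" for a by (auto intro: order_trans)
    have "(\<Sum>a\<in>{x..y}. \<Sum>b\<in>{b. b\<in>{x..y} \<and> a \<le> b}. f a b) = (\<Sum>a\<in>{x..y}. (if a = y then 1 else 0))"
    proof (rule sum.cong)
      fix a assume a: "a \<in> {x..y}"
      show "(\<Sum>b\<in>{b. b\<in>{x..y} \<and> a \<le> b}. f a b) = (if a = y then 1 else 0)"
        unfolding e2[OF a] using a by (intro h) auto
    qed simp
    also have "\<dots> = 1" using less.prems fin by (simp add: sum.delta')
    finally have L0: "(\<Sum>a\<in>{x..y}. \<Sum>b\<in>{b. b\<in>{x..y} \<and> a \<le> b}. f a b) = 1" .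
    have "(\<Sum>b\<in>{x..y}. \<Sum>a\<in>{a. a\<in>{x..y} \<and> a \<le> b}. f a b) = (\<Sum>b\<in>{x..y}. \<Sum>a\<in>{x..b}. f a b)"
      by (rule sum.cong[OF refl]) (simp only: e1)
    with L0 sw have L: "(\<Sum>b\<in>{x..y}. \<Sum>a\<in>{x..b}. f a b) = 1" by simp
    have "(\<Sum>b\<in>{x..y}. \<Sum>a\<in>{x..b}. f a b) = (\<Sum>a\<in>{x..y}. f a y) + (\<Sum>b\<in>{x..y}-{y}. \<Sum>a\<in>{x..b}. f a b)"
      using less.prems by (intro sum.remove[OF fin]) auto
    also have "(\<Sum>b\<in>{x..y}-{y}. \<Sum>a\<in>{x..b}. f a b) = (\<Sum>b\<in>{x..y}-{y}. (if x = b then 1 else 0))"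
      by (rule sum.cong, simp, rule IH)
    also have "\<dots> = 1" using less.prems False fin by (simp add: sum.delta)
    finally show ?thesis using L False by simp
  qed
qed


definition Rel :: "(('a::order \<times> 'a \<times> 'a) \<times> ('a \<times> 'a \<times> 'a)) set" where
  "Rel = {((a, y', b), (x, y, z)). y' = y \<and> x \<le> a \<and> a \<le> y \<and> y \<le> b \<and> b \<le> z \<and> (a \<noteq> x \<or> b \<noteq> z)}"

lemma wf_Rel:
  assumes fin: "\<And>x y::'a::order. finite {x..y}"
  shows "wf (Rel :: (('a \<times> 'a \<times> 'a) \<times> ('a \<times> 'a \<times> 'a)) set)"
proof (rule wf_subset[OF wf_measure[of "\<lambda>(x,y,z). card {x..y} + card {y..z}"]])
  have key: "card {a..y} + card {y..b} < card {x..y} + card {y..z}"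
    if h: "x \<le> a" "a \<le> y" "y \<le> b" "b \<le> z" "a \<noteq> x \<or> b \<noteq> z" for a y b x z :: 'a
  proof -
    have s1: "{a..y} \<subseteq> {x..y}" "{y..b} \<subseteq> {y..z}" using h by (auto intro: order_trans)
    have c1: "card {a..y} \<le> card {x..y}" "card {y..b} \<le> card {y..z}"
      using card_mono[OF fin s1(1)] card_mono[OF fin s1(2)] by auto
    show ?thesis
    proof (cases "a = x")
      case True
      then have "b \<noteq> z" using h by auto
      then have "{y..b} \<subset> {y..z}" using s1 h by auto
      then have "card {y..b} < card {y..z}" by (rule psubset_card_mono[OF fin])
      then show ?thesis using c1 by simp
    next
      case False
      then have "{a..y} \<subset> {x..y}" using s1 h by auto
      then have "card {a..y} < card {x..y}" by (rule psubset_card_mono[OF fin])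
      then show ?thesis using c1 by simp
    qed
  qed
  show "Rel \<subseteq> measure (\<lambda>(x::'a,y,z). card {x..y} + card {y..z})"
    by (auto simp: Rel_def intro: key)
qed

definition Prop :: "('a::order \<Rightarrow> 'a \<Rightarrow> 'a \<Rightarrow> int) \<Rightarrow> bool" where
  "Prop j = ((\<forall>x y z. (x, y, z) \<notin> Fl3 \<longrightarrow> j x y z = 0) \<and>
               (\<forall>x y z. (x, y, z) \<in> Fl3 \<longrightarrow> (zeta3 \<triangleright> j) x y z = delta3 x y z))"

lemma tri_split:
  fixes x y z :: "'a::order"
  assumes fin: "\<And>x y::'a. finite {x..y}" and "x \<le> y" "y \<le> z"
  shows "(zeta3 \<triangleright> j) x y z = j x y z + (\<Sum>(a, b) \<in> {x..y} \<times> {y..z} - {(x, z)}. j a y b)"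
proof -
  have "(zeta3 \<triangleright> j) x y z = (\<Sum>(a, b) \<in> {x..y} \<times> {y..z}. j a y b)"
    by (simp add: tri_def zeta3_def)
  also have "\<dots> = (\<lambda>(a, b). j a y b) (x, z) + (\<Sum>(a, b) \<in> {x..y} \<times> {y..z} - {(x, z)}. j a y b)"
    using assms by (intro sum.remove) (simp_all add: fin)
  finally show ?thesis by simp
qed

definition Fj :: "(('a::order \<times> 'a \<times> 'a) \<Rightarrow> int) \<Rightarrow> ('a \<times> 'a \<times> 'a) \<Rightarrow> int" where
  "Fj j t = (case t of (x, y, z) \<Rightarrow> if x \<le> y \<and> y \<le> z then
     delta3 x y z - (\<Sum>(a, b) \<in> {x..y} \<times> {y..z} - {(x, z)}. j (a, y, b)) else 0)"

lemma Prop_ex: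
  assumes fin: "\<And>x y::'a::order. finite {x..y}"
  shows "\<exists>j::'a \<Rightarrow> 'a \<Rightarrow> 'a \<Rightarrow> int. Prop j"
proof -
  define jt where "jt = wfrec Rel (Fj :: (('a \<times> 'a \<times> 'a) \<Rightarrow> int) \<Rightarrow> _)"
  have eq: "jt t = Fj (cut jt Rel t) t" for t
    unfolding jt_def by (rule wfrec[OF wf_Rel[OF fin]])
  have out: "jt (x, y, z) = 0" if "(x, y, z) \<notin> Fl3" for x y z
    using that by (subst eq) (auto simp: Fj_def Fl3_def)
  have inn: "(zeta3 \<triangleright> (\<lambda>x y z. jt (x, y, z))) x y z = delta3 x y z" if "(x, y, z) \<in> Fl3" for x y z
  proof -
    have xy: "x \<le> y" "y \<le> z" using that by (auto simp: Fl3_def)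
    have "(\<Sum>(a, b) \<in> {x..y} \<times> {y..z} - {(x, z)}. cut jt Rel (x, y, z) (a, y, b))
       = (\<Sum>(a, b) \<in> {x..y} \<times> {y..z} - {(x, z)}. jt (a, y, b))"
      by (rule sum.cong) (auto simp: cut_def Rel_def split: if_splits)
    moreover have "jt (x, y, z) = delta3 x y z - (\<Sum>(a, b) \<in> {x..y} \<times> {y..z} - {(x, z)}. cut jt Rel (x, y, z) (a, y, b))"
      using eq[of "(x,y,z)"] xy by (simp only: Fj_def) simp
    ultimately have "jt (x, y, z) = delta3 x y z - (\<Sum>(a, b) \<in> {x..y} \<times> {y..z} - {(x, z)}. jt (a, y, b))"
      by simp
    then show ?thesis using tri_split[OF fin xy, of "\<lambda>x y z. jt (x, y, z)"] by simp
  qed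
  show ?thesis unfolding Prop_def
    by (rule exI[of _ "\<lambda>x y z. jt (x, y, z)"]) (use out inn in auto)
qed

lemma Prop_uniq:
  assumes fin: "\<And>x y::'a::order. finite {x..y}"
  and p1: "Prop (j1 :: 'a \<Rightarrow> 'a \<Rightarrow> 'a \<Rightarrow> int)" and p2: "Prop j2"
  shows "j1 = j2"
proof -
  have "\<forall>x y z. t = (x, y, z) \<longrightarrow> j1 x y z = j2 x y z" for t
  proof (induction t rule: wf_induct[OF wf_Rel[OF fin]])
    case (1 t)
    show ?case
    proof (intro allI impI)
      fix x y z assume t: "t = (x, y, z)"
      show "j1 x y z = j2 x y z"
      proof (cases "(x, y, z) \<in> Fl3")
        case False then show ?thesis using p1 p2 by (simp add: Prop_def)
      next
        case True
        then have xy: "x \<le> y" "y \<le> z" by (auto simp: Fl3_def)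
        have s: "(\<Sum>(a, b) \<in> {x..y} \<times> {y..z} - {(x, z)}. j1 a y b)
            = (\<Sum>(a, b) \<in> {x..y} \<times> {y..z} - {(x, z)}. j2 a y b)"
        proof (rule sum.cong[OF refl])
          fix p assume p: "p \<in> {x..y} \<times> {y..z} - {(x, z)}"
          obtain a b where ab: "p = (a, b)" by force
          have "((a, y, b), t) \<in> Rel" using p ab t by (auto simp: Rel_def)
          then show "(case p of (a, b) \<Rightarrow> j1 a y b) = (case p of (a, b) \<Rightarrow> j2 a y b)"
            using 1 ab by auto
        qed
        have "(zeta3 \<triangleright> j1) x y z = (zeta3 \<triangleright> j2) x y z"
          using p1 p2 True by (simp add: Prop_def)
        then show ?thesis using tri_split[OF fin xy, of j1] tri_split[OF fin xy, of j2] s by simp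
      qed
    qed
  qed
  then show ?thesis by (intro ext) blast
qed

theorem corollary5p3:
  assumes "locally_finite_poset TYPE('a::order)"
  shows "\<forall>x y z :: 'a. (x, y, z) \<in> Fl3 \<longrightarrow> (J \<triangleright> zeta3) x y z = delta3 x y z"
proof (intro allI impI)
  have fin: "\<And>x y::'a. finite {x..y}" using assms by (simp add: locally_finite_poset_def)
  have PJ: "Prop (J :: 'a \<Rightarrow> 'a \<Rightarrow> 'a \<Rightarrow> int)"
  proof -
    obtain j :: "'a \<Rightarrow> 'a \<Rightarrow> 'a \<Rightarrow> int" where pj: "Prop j" using Prop_ex[OF fin] by blast
    have "Prop (THE j::'a \<Rightarrow> 'a \<Rightarrow> 'a \<Rightarrow> int. Prop j)"
      by (rule theI[where a=j and P=Prop, OF pj]) (rule Prop_uniq[OF fin _ pj])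
    then show ?thesis unfolding J_def Prop_def[symmetric] by simp
  qed
  have A: "(\<Sum>a\<in>{x..y}. J a y y) = (if x = y then 1 else 0)" if "x \<le> y" for x y :: 'a
  proof -
    have "(zeta3 \<triangleright> J) x y y = delta3 x y y" using PJ that by (simp add: Prop_def Fl3_def)
    then show ?thesis by (simp add: tri_def zeta3_def delta3_def sum.cartesian_product[symmetric])
  qed
  have B: "(\<Sum>b\<in>{y..z}. J y y b) = (if y = z then 1 else 0)" if "y \<le> z" for y z :: 'a
  proof -
    have "(zeta3 \<triangleright> J) y y z = delta3 y y z" using PJ that by (simp add: Prop_def Fl3_def)
    then show ?thesis by (simp add: tri_def zeta3_def delta3_def sum.cartesian_product[symmetric])
  qed
  have A': "(\<Sum>a\<in>{x..y}. J x a a) = (if x = y then 1 else 0)" if "x \<le> y" for x y :: 'a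
    using inv_left[OF fin, of "\<lambda>a y. J a y y"] A that by blast
  have B': "(\<Sum>b\<in>{y..z}. J b b z) = (if y = z then 1 else 0)" if "y \<le> z" for y z :: 'a
    using inv_right[OF fin, of "\<lambda>y b. J y y b"] B that by blast
  fix x y z :: 'a assume "(x, y, z) \<in> Fl3"
  then have xy: "x \<le> y" "y \<le> z" by (auto simp: Fl3_def)
  have "(J \<triangleright> zeta3) x y z = (\<Sum>(a, b) \<in> {x..y} \<times> {y..z}. J x a a * J b b z)"
    by (simp add: tri_def zeta3_def)
  also have "\<dots> = (\<Sum>a\<in>{x..y}. J x a a) * (\<Sum>b\<in>{y..z}. J b b z)"
    by (simp add: sum_product sum.cartesian_product)
  also have "\<dots> = delta3 x y z" using A'[OF xy(1)] B'[OF xy(2)] by (simp add: delta3_def)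
  finally show "(J \<triangleright> zeta3) x y z = delta3 x y z" .
qed

end
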